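(* In the two-shock setting ($v_\pm>0$, $u_->u_+$, intermediate state $(u_*^{\epsilon_1\epsilon_2},v_*^{\epsilon_1\epsilon_2})$, shock speeds $\sigma_1^{\epsilon_1\epsilon_2},\sigma_2^{\epsilon_1\epsilon_2}$), $$\lim_{\epsilon_1,\epsilon_2\to0}u_*^{\epsilon_1\epsilon_2}=\lim_{\epsilon_1,\epsilon_2\to0}\sigma_1^{\epsilon_1\epsilon_2}=\lim_{\epsilon_1,\epsilon_2\to0}\sigma_2^{\epsilon_1\epsilon_2}=\frac{u_-+u_+}{2}.$$
   Context: Perturbed Brio system: $u_t+(\tfrac12u^2+\tfrac12\epsilon_1v^2)_x=0$, $v_t+(uv-\epsilon_2v)_x=0$, $\epsilon_1,\epsilon_2>0$, $v>0$, with Riemann data $(u_-,v_-)$ for $x<0$, $(u_+,v_+)$ for $x>0$. A two-shock Riemann solution is one with an intermediate state $(u_*,v_* )$, $v_*>\max(v_-,v_+)$, $u_+<u_*<u_-$, such that $$u_*=u_-+(v_*-v_-)\frac{\epsilon_2-\sqrt{\epsilon_2^2+4\epsilon_1(v_*+v_-)^2}}{v_*+v_-},\qquad u_+=u_*+(v_+-v_* )\frac{\epsilon_2+\sqrt{\epsilon_2^2+4\epsilon_1(v_*+v_+)^2}}{v_*+v_+},$$ with shock speeds $\sigma_1=u_-+\frac{v_*(u_*-u_-)}{v_*-v_-}-\epsilon_2$ and $\sigma_2=u_++\frac{v_*(u_+-u_* )}{v_+-v_*}-\epsilon_2$. The limit is taken over parameters for which this solution exists. *)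

theory Defs
  imports Complex_Main
begin

text \<open>Two-shock Riemann solution of the perturbed Brio system with parameters e1, e2,
  left state (um, vm), right state (up, vp), intermediate state (us, vs).\<close>
definition two_shock ::
  "real \<Rightarrow> real \<Rightarrow> real \<Rightarrow> real \<Rightarrow> real \<Rightarrow> real \<Rightarrow> real \<Rightarrow> real \<Rightarrow> bool" where
  "two_shock e1 e2 um vm up vp us vs \<longleftrightarrow>
     vs > max vm vp \<and> up < us \<and> us < um \<and>
     us = um + (vs - vm) * ((e2 - sqrt (e2^2 + 4 * e1 * (vs + vm)^2)) / (vs + vm)) \<and>
     up = us + (vp - vs) * ((e2 + sqrt (e2^2 + 4 * e1 * (vs + vp)^2)) / (vs + vp))"

definition sigma1 :: "real \<Rightarrow> real \<Rightarrow> real \<Rightarrow> real \<Rightarrow> real \<Rightarrow> real" where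
  "sigma1 e2 um vm us vs = um + vs * (us - um) / (vs - vm) - e2"

definition sigma2 :: "real \<Rightarrow> real \<Rightarrow> real \<Rightarrow> real \<Rightarrow> real \<Rightarrow> real" where
  "sigma2 e2 up vp us vs = up + vs * (up - us) / (vp - vs) - e2"

end

theory Submission
  imports Defs
begin

lemma sq_bounds:
  fixes e1 e2 a :: real
  assumes "e1 > 0" "e2 > 0" "a > 0"
  shows "2*sqrt e1*a \<le> sqrt (e2^2 + 4*e1*a^2)" "sqrt (e2^2 + 4*e1*a^2) \<le> e2 + 2*sqrt e1*a"
proof -
  have h: "(2*sqrt e1*a)^2 = 4*e1*a^2" using assms by (simp add: power_mult_distrib)
  have "sqrt ((2*sqrt e1*a)^2) \<le> sqrt (e2^2 + 4*e1*a^2)"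
    using h by (intro real_sqrt_le_mono) simp
  thus "2*sqrt e1*a \<le> sqrt (e2^2 + 4*e1*a^2)" using assms by simp
  have "e2^2 + 4*e1*a^2 \<le> (e2 + 2*sqrt e1*a)^2"
    using h assms by (simp add: power2_sum)
  hence "sqrt (e2^2 + 4*e1*a^2) \<le> sqrt ((e2 + 2*sqrt e1*a)^2)" by (rule real_sqrt_le_mono)
  thus "sqrt (e2^2 + 4*e1*a^2) \<le> e2 + 2*sqrt e1*a" using assms by simp
qed

lemma helper: fixes A B C D E F G H T M P N K Q R S e2 \<epsilon> :: real
assumes 
 "0 \<le> A" "A \<le> e2" "0 \<le> G" "G \<le> e2" "T \<le> B" "B \<le> A + T" "T \<le> H" "H \<le> G + T"
 "M \<le> D" "D \<le> C + M" "0 \<le> C" "C \<le> e2" "0 \<le> E" "E \<le> e2" "P \<le> F" "F \<le> E + P" "0 \<le> P" "0 \<le> M"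
 "M \<le> 2 * N" "P \<le> 2 * K" "N + K = \<epsilon> / 6" "0 \<le> K" "0 \<le> N"
 "0 < e2" "e2 < \<epsilon> / 20" "0 < \<epsilon>"
shows "A - B - C + D - E - F + G + H < 2*\<epsilon>" "-(A - B - C + D - E - F + G + H) < 2*\<epsilon>"
  "2*A - 2*B - 2*e2 + (B - A + C - D - E - F + G + H) < 2*\<epsilon>"
  "-(2*A - 2*B - 2*e2 + (B - A + C - D - E - F + G + H)) < 2*\<epsilon>"
  "2*G + 2*H - 2*e2 - (B - A + C - D - E - F + G + H) < 2*\<epsilon>"
  "-(2*G + 2*H - 2*e2 - (B - A + C - D - E - F + G + H)) < 2*\<epsilon>"
  using assms by linarith+

lemma half1: "2*(x::real) < 2*e \<Longrightarrow> x < e" by linarith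
lemma half2: "-(2*(x::real)) < 2*e \<Longrightarrow> -x < e" by linarith

theorem lemma5p3:
  fixes um vm up vp :: real
  assumes "vm > 0" and "vp > 0" and "um > up"
  shows "\<forall>\<epsilon>>0. \<exists>\<delta>>0. \<forall>e1 e2 us vs.
           0 < e1 \<and> e1 < \<delta> \<and> 0 < e2 \<and> e2 < \<delta> \<and> two_shock e1 e2 um vm up vp us vs \<longrightarrow>
             \<bar>us - (um + up) / 2\<bar> < \<epsilon> \<and>
             \<bar>sigma1 e2 um vm us vs - (um + up) / 2\<bar> < \<epsilon> \<and>
             \<bar>sigma2 e2 up vp us vs - (um + up) / 2\<bar> < \<epsilon>"
proof (intro allI impI)
  fix \<epsilon> :: real assume ep: "\<epsilon> > 0"
  define \<eta> where "\<eta> = \<epsilon> / (6*(vm+vp))"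
  have eta: "\<eta> > 0" "(vm+vp)*\<eta> = \<epsilon>/6" using ep assms by (auto simp: \<eta>_def field_simps)
  define \<delta> where "\<delta> = min (\<epsilon>/20) (\<eta>^2)"
  show "\<exists>\<delta>>0. \<forall>e1 e2 us vs.
           0 < e1 \<and> e1 < \<delta> \<and> 0 < e2 \<and> e2 < \<delta> \<and> two_shock e1 e2 um vm up vp us vs \<longrightarrow>
             \<bar>us - (um + up) / 2\<bar> < \<epsilon> \<and>
             \<bar>sigma1 e2 um vm us vs - (um + up) / 2\<bar> < \<epsilon> \<and>
             \<bar>sigma2 e2 up vp us vs - (um + up) / 2\<bar> < \<epsilon>"
  proof (intro exI[of _ \<delta>] conjI allI impI)
    show "\<delta> > 0" using ep eta by (simp add: \<delta>_def)
    fix e1 e2 us vs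
    assume H: "0 < e1 \<and> e1 < \<delta> \<and> 0 < e2 \<and> e2 < \<delta> \<and> two_shock e1 e2 um vm up vp us vs"
    hence e1: "0 < e1" "e1 < \<eta>^2" and e2: "0 < e2" "e2 < \<epsilon>/20"
      and ts: "two_shock e1 e2 um vm up vp us vs" by (auto simp: \<delta>_def)
    have vs: "vs > vm" "vs > vp" and
      U1: "us = um + (vs - vm) * ((e2 - sqrt (e2^2 + 4 * e1 * (vs + vm)^2)) / (vs + vm))" and
      U2: "up = us + (vp - vs) * ((e2 + sqrt (e2^2 + 4 * e1 * (vs + vp)^2)) / (vs + vp))"
      using ts by (auto simp: two_shock_def)
    define a where "a = vs + vm"
    define b where "b = vs + vp"
    have a: "a > 0" "a > vm" "a > vs" and b: "b > 0" "b > vp" "b > vs"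
      using vs assms by (auto simp: a_def b_def)
    define S1 where "S1 = sqrt (e2^2 + 4 * e1 * a^2)"
    define S2 where "S2 = sqrt (e2^2 + 4 * e1 * b^2)"
    define t where "t = 2 * sqrt e1"
    have t: "0 < t" "t < 2*\<eta>" using e1 eta
      by (auto simp: t_def intro!: real_less_lsqrt)
    have S1b: "t*a \<le> S1" "S1 \<le> e2 + t*a" using sq_bounds[OF e1(1) e2(1) a(1)]
      by (auto simp: S1_def t_def)
    have S2b: "t*b \<le> S2" "S2 \<le> e2 + t*b" using sq_bounds[OF e1(1) e2(1) b(1)]
      by (auto simp: S2_def t_def)
    define p where "p = S1 / a"
    define q where "q = S2 / b"
    define r where "r = e2 / a"
    define s where "s = e2 / b"
    have pb: "t \<le> p" "p \<le> r + t" using S1b a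
      by (auto simp: p_def r_def field_simps)
    have qb: "t \<le> q" "q \<le> s + t" using S2b b
      by (auto simp: q_def s_def field_simps)
    have rb: "0 \<le> vs*r" "vs*r \<le> e2" "vm*r \<le> e2" "0 \<le> vm*r" using a e2 vs assms
      by (auto simp: r_def field_simps)
    have sb: "0 \<le> vs*s" "vs*s \<le> e2" "vp*s \<le> e2" "0 \<le> vp*s" using b e2 vs assms
      by (auto simp: s_def field_simps)
    have vpb: "vs*t \<le> vs*p" "vs*p \<le> vs*r + vs*t" using pb vs assms
      by (auto intro: mult_left_mono simp: distrib_left[symmetric])
    have vqb: "vs*t \<le> vs*q" "vs*q \<le> vs*s + vs*t" using qb vs assms
      by (auto intro: mult_left_mono simp: distrib_left[symmetric])
    have mpb: "vm*t \<le> vm*p" "vm*p \<le> vm*r + vm*t" using pb assms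
      by (auto intro: mult_left_mono simp: distrib_left[symmetric])
    have mqb: "vp*t \<le> vp*q" "vp*q \<le> vp*s + vp*t" using qb assms
      by (auto intro: mult_left_mono simp: distrib_left[symmetric])
    have tb: "vm*t \<le> 2*(vm*\<eta>)" "vp*t \<le> 2*(vp*\<eta>)" using t assms by auto
    have E1: "us = um + vs*r - vs*p - vm*r + vm*p"
    proof -
      have "(e2 - S1) / a = r - p" by (simp add: r_def p_def diff_divide_distrib)
      hence "us = um + (vs - vm) * (r - p)" using U1 unfolding a_def[symmetric] S1_def[symmetric]
        by simp
      thus ?thesis by (simp add: algebra_simps)
    qed
    have E2: "up = us + vp*s + vp*q - vs*s - vs*q"
    proof -
      have "(e2 + S2) / b = s + q" by (simp add: s_def q_def add_divide_distrib)
      hence "up = us + (vp - vs) * (s + q)" using U2 unfolding b_def[symmetric] S2_def[symmetric]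
        by simp
      thus ?thesis by (simp add: algebra_simps)
    qed
    have "vs - vm \<noteq> 0" "vp - vs \<noteq> 0" using vs by auto
    have Sg1: "sigma1 e2 um vm us vs = um + vs*r - vs*p - e2"
    proof -
      have "us - um = (vs - vm) * (r - p)" using E1 by (simp add: algebra_simps)
      hence "vs * (us - um) / (vs - vm) = vs*(r - p)"
        using \<open>vs - vm \<noteq> 0\<close> by simp
      hence "vs * (us - um) / (vs - vm) = vs*r - vs*p" by (simp add: algebra_simps)
      thus ?thesis by (simp add: sigma1_def)
    qed
    have Sg2: "sigma2 e2 up vp us vs = up + vs*s + vs*q - e2"
    proof -
      have "up - us = (vp - vs) * (s + q)" using E2 by (simp add: algebra_simps)
      hence "vs * (up - us) / (vp - vs) = vs*(s + q)"
        using \<open>vp - vs \<noteq> 0\<close> by simp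
      hence "vs * (up - us) / (vp - vs) = vs*s + vs*q" by (simp add: algebra_simps)
      thus ?thesis by (simp add: sigma2_def)
    qed
    have ee: "vm*\<eta> + vp*\<eta> = \<epsilon>/6" using eta by (simp add: algebra_simps)
    have pos: "vm*\<eta> \<ge> 0" "vp*\<eta> \<ge> 0" "vm*t \<ge> 0" "vp*t \<ge> 0" using eta assms t by auto
    note F = pos rb sb vpb vqb mpb mqb tb ee e2 ep
    have U: "2*(us - (um + up) / 2) = vs * r - vs * p - vm * r + vm * p - vp * s - vp * q + vs * s + vs * q"
      using E1 E2 by (simp add: field_simps)
    have V1: "2*(um + vs*r - vs*p - e2 - (um + up) / 2) = 2*(vs*r) - 2*(vs*p) - 2*e2 + (um - up)"
      by (simp add: field_simps)
    have V2: "2*(up + vs*s + vs*q - e2 - (um + up) / 2) = 2*(vs*s) + 2*(vs*q) - 2*e2 - (um - up)"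
      by (simp add: field_simps)
    have W: "um - up = vs * p - vs * r + vm * r - vm * p - vp * s - vp * q + vs * s + vs * q"
      using E1 E2 by simp
    note HH = helper[of "vs*r" e2 "vs*s" "vs*t" "vs*p" "vs*q" "vm*t" "vm*p" "vm*r" "vp*s" "vp*t" "vp*q" "vm*\<eta>" "vp*\<eta>" \<epsilon>,
      OF rb(1,2) sb(1,2) vpb vqb mpb rb(4,3) sb(4,3) mqb pos(4,3) tb ee pos(2,1) e2 ep]
    have A1: "us - (um + up) / 2 < \<epsilon>" by (rule half1) (unfold U, rule HH(1))
    have A1': "-(us - (um + up) / 2) < \<epsilon>" by (rule half2) (unfold U, rule HH(2))
    have A2: "um + vs*r - vs*p - e2 - (um + up) / 2 < \<epsilon>" by (rule half1) (unfold V1 W, rule HH(3))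
    have A2': "-(um + vs*r - vs*p - e2 - (um + up) / 2) < \<epsilon>" by (rule half2) (unfold V1 W, rule HH(4))
    have A3: "up + vs*s + vs*q - e2 - (um + up) / 2 < \<epsilon>" by (rule half1) (unfold V2 W, rule HH(5))
    have A3': "-(up + vs*s + vs*q - e2 - (um + up) / 2) < \<epsilon>" by (rule half2) (unfold V2 W, rule HH(6))
    show "\<bar>us - (um + up) / 2\<bar> < \<epsilon>"
      "\<bar>sigma1 e2 um vm us vs - (um + up) / 2\<bar> < \<epsilon>"
      "\<bar>sigma2 e2 up vp us vs - (um + up) / 2\<bar> < \<epsilon>"
      unfolding Sg1 Sg2 abs_less_iff using A1 A2 A3 A1' A2' A3' by (simp_all add: minus_less_iff)
  qed
qed

end
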